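(* Let $G,\Omega\in\{\mathbb{D},\mathbb{H}\}$, where $\mathbb{D}=\{z\in\mathbb{C}:|z|<1\}$ and $\mathbb{H}=\{z\in\mathbb{C}:\operatorname{Im}z>0\}$, let $f:G\to\Omega$ be a Möbius transformation of $G$ onto $\Omega$, and let $1\le p\le\infty$. Then $f:(G,b_{G,p})\to(\Omega,b_{\Omega,p})$ is $L$-Lipschitz, i.e. $b_{\Omega,p}(f(z_1),f(z_2))\le L\,b_{G,p}(z_1,z_2)$ for all $z_1,z_2\in G$, with $L=2^{2-1/p}$ if $G=\mathbb{D}$ and $L=2^{1-1/p}$ if $G=\mathbb{H}$ (with $1/p=0$ when $p=\infty$).
   Context: For a domain $G\subsetneq\mathbb{C}$, $z_1,z_2\in G$ and $1\le p<\infty$, $b_{G,p}(z_1,z_2)=\sup_{z\in\partial G}\frac{|z_1-z_2|}{\sqrt[p]{|z_1-z|^p+|z-z_2|^p}}$, and $b_{G,\infty}(z_1,z_2)=\sup_{z\in\partial G}\frac{|z_1-z_2|}{\max\{|z_1-z|,|z_2-z|\}}$. *)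

theory Defs
  imports "HOL-Analysis.Analysis" "HOL-Library.Extended_Real"
begin

definition unit_disc :: "complex set" where
  "unit_disc = ball 0 1"

definition upper_half_plane :: "complex set" where
  "upper_half_plane = {z. Im z > 0}"

definition b_fun :: "complex set \<Rightarrow> ereal \<Rightarrow> complex \<Rightarrow> complex \<Rightarrow> real" where
  "b_fun G p z1 z2 =
     (SUP z \<in> frontier G.
        (if p = \<infinity> then cmod (z1 - z2) / max (cmod (z1 - z)) (cmod (z2 - z))
         else cmod (z1 - z2) /
              ((cmod (z1 - z) powr real_of_ereal p + cmod (z - z2) powr real_of_ereal p)
                 powr (1 / real_of_ereal p))))"

definition mobius_onto :: "(complex \<Rightarrow> complex) \<Rightarrow> complex set \<Rightarrow> complex set \<Rightarrow> bool" where
  "mobius_onto f G \<Omega> \<longleftrightarrow>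
     (\<exists>a b c d. a * d - b * c \<noteq> 0 \<and> (\<forall>z\<in>G. c * z + d \<noteq> 0 \<and> f z = (a * z + b) / (c * z + d)))
     \<and> f ` G = \<Omega>"

end

theory Submission
  imports Defs "HOL-Complex_Analysis.Complex_Analysis"
begin

lemma pm1:
  fixes a b q :: real assumes "q \<ge> 1" "a \<ge> 0" "b \<ge> 0"
  shows "max a b \<le> (a powr q + b powr q) powr (1/q)"
proof -
  have "a = (a powr q) powr (1/q)" using assms by (simp add: powr_powr)
  also have "\<dots> \<le> (a powr q + b powr q) powr (1/q)"
    using assms by (intro powr_mono2) auto
  finally have 1: "a \<le> (a powr q + b powr q) powr (1/q)" .
  have "b = (b powr q) powr (1/q)" using assms by (simp add: powr_powr)
  also have "\<dots> \<le> (a powr q + b powr q) powr (1/q)"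
    using assms by (intro powr_mono2) auto
  finally show ?thesis using 1 by simp
qed

lemma pm2:
  fixes a b q :: real assumes "q \<ge> 1" "a \<ge> 0" "b \<ge> 0"
  shows "(a powr q + b powr q) powr (1/q) \<le> a + b"
proof (cases "a + b = 0")
  case True then have "a = 0" "b = 0" using assms by auto
  then show ?thesis using assms by simp
next
  case False
  then have ab: "a + b > 0" using assms by auto
  define s where "s = a / (a+b)"
  have s01: "0 \<le> s" "s \<le> 1" using assms ab by (auto simp: s_def)
  have a_eq: "a = s * (a+b)" and b_eq: "b = (1-s)*(a+b)" using ab by (auto simp: s_def field_simps)
  have "s powr q \<le> s powr 1" using s01 assms by (intro powr_mono') auto
  then have "s powr q \<le> s" using s01 by simp
  moreover have "(1-s) powr q \<le> (1-s) powr 1" using s01 assms by (intro powr_mono') auto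
  then have "(1-s) powr q \<le> 1 - s" using s01 by simp
  ultimately have "a powr q + b powr q \<le> (a+b) powr q"
  proof -
    assume h1: "s powr q \<le> s" and h2: "(1-s) powr q \<le> 1 - s"
    have "a powr q + b powr q = (s powr q + (1-s) powr q) * (a+b) powr q"
      using s01 ab by (subst a_eq, subst b_eq) (simp add: powr_mult distrib_right)
    also have "\<dots> \<le> 1 * (a+b) powr q"
      using h1 h2 by (intro mult_right_mono) auto
    finally show ?thesis by simp
  qed
  then have "(a powr q + b powr q) powr (1/q) \<le> ((a+b) powr q) powr (1/q)"
    using assms by (intro powr_mono2) auto
  also have "\<dots> = a + b" using assms ab by (simp add: powr_powr)
  finally show ?thesis .
qed

lemma pm3:
  fixes a b q :: real assumes "q \<ge> 1" "a \<ge> 0" "b \<ge> 0"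
  shows "a + b \<le> 2 powr (1 - 1/q) * (a powr q + b powr q) powr (1/q)"
proof -
  have c1: "1 \<le> 2 powr (1 - 1/q)" using assms by (auto simp: ge_one_powr_ge_zero)
  show ?thesis
  proof (cases "a = 0 \<or> b = 0")
    case True
    then have "(a powr q + b powr q) powr (1/q) = a + b" using assms by (auto simp: powr_powr)
    moreover have "1 * (a + b) \<le> 2 powr (1 - 1/q) * (a + b)"
      using c1 assms by (intro mult_right_mono) auto
    ultimately show ?thesis by simp
  next
    case False
    then have pos: "a > 0" "b > 0" using assms by auto
    have "((1 - 1/2) *\<^sub>R a + (1/2) *\<^sub>R b) powr q \<le> (1 - 1/2) * a powr q + (1/2) * b powr q"
      using convex_onD[OF powr_convex[OF assms(1)], of "1/2" a b] pos by auto
    then have h: "((a+b)/2) powr q \<le> (a powr q + b powr q) / 2" by (simp add: field_simps)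
    have "(a+b)/2 = (((a+b)/2) powr q) powr (1/q)" using assms pos by (simp add: powr_powr)
    also have "\<dots> \<le> ((a powr q + b powr q) / 2) powr (1/q)"
      using h assms pos by (intro powr_mono2) auto
    also have "\<dots> = (a powr q + b powr q) powr (1/q) / 2 powr (1/q)"
      using pos by (simp add: powr_divide)
    finally have "a + b \<le> 2 * ((a powr q + b powr q) powr (1/q) / 2 powr (1/q))" by (simp add: algebra_simps)
    also have "\<dots> = 2 powr (1 - 1/q) * (a powr q + b powr q) powr (1/q)"
      by (simp add: powr_diff)
    finally show ?thesis .
  qed
qed

definition tD :: "complex \<Rightarrow> complex \<Rightarrow> real" where
  "tD z w = cmod (Moebius_function 0 w z)"

lemma tD_eq: "tD z w = cmod (z - w) / cmod (1 - cnj w * z)"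
  by (simp add: tD_def Moebius_function_simple norm_divide)

lemma schwarz_pick:
  assumes holg: "g holomorphic_on ball 0 1" and gD: "\<And>z. z \<in> ball 0 1 \<Longrightarrow> g z \<in> ball 0 1"
    and z: "z \<in> ball 0 1" and w: "w \<in> ball 0 1"
  shows "tD (g z) (g w) \<le> tD z w"
proof -
  have nw: "norm w < 1" and ngw: "norm (g w) < 1" using w gD[OF w] by auto
  define h where "h = Moebius_function 0 (g w) \<circ> (g \<circ> Moebius_function 0 (-w))"
  have m1: "Moebius_function 0 (-w) ` ball 0 1 \<subseteq> ball 0 1"
    using Moebius_function_norm_lt_1[of "-w"] nw by auto
  have "(g \<circ> Moebius_function 0 (-w)) holomorphic_on ball 0 1"
    by (rule holomorphic_on_compose_gen[OF Moebius_function_holomorphic holg m1]) (use nw in auto)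
  moreover have "(g \<circ> Moebius_function 0 (-w)) ` ball 0 1 \<subseteq> ball 0 1" using gD m1 by auto
  ultimately have holh: "h holomorphic_on ball 0 1" unfolding h_def
    by (intro holomorphic_on_compose_gen[OF _ Moebius_function_holomorphic]) (auto simp: ngw)
  have h0: "h 0 = 0" by (simp add: h_def Moebius_function_of_zero Moebius_function_eq_zero)
  have hno: "norm (h \<xi>) < 1" if "norm \<xi> < 1" for \<xi>
  proof -
    have "Moebius_function 0 (-w) \<xi> \<in> ball 0 1" using Moebius_function_norm_lt_1[of "-w" \<xi> 0] nw that by auto
    then show ?thesis unfolding h_def using gD ngw by (auto intro!: Moebius_function_norm_lt_1)
  qed
  define \<xi> where "\<xi> = Moebius_function 0 w z"
  have nxi: "norm \<xi> < 1" unfolding \<xi>_def using nw z by (auto intro!: Moebius_function_norm_lt_1)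
  have inv: "Moebius_function 0 (-w) \<xi> = z" unfolding \<xi>_def
    by (rule Moebius_function_compose) (use nw z in auto)
  have "norm (h \<xi>) \<le> norm \<xi>" by (rule Schwarz_Lemma(1)[OF holh h0 hno nxi])
  moreover have "norm (h \<xi>) = tD (g z) (g w)" by (simp add: h_def inv tD_def)
  moreover have "norm \<xi> = tD z w" by (simp add: \<xi>_def tD_def)
  ultimately show ?thesis by simp
qed

definition cay :: "complex \<Rightarrow> complex" where "cay z = (z - \<i>) / (z + \<i>)"
definition cayi :: "complex \<Rightarrow> complex" where "cayi w = \<i> * (1 + w) / (1 - w)"

lemma cay_D: assumes "Im z > 0" shows "cay z \<in> ball 0 1"
proof -
  have ne: "z + \<i> \<noteq> 0" using assms by (auto simp: complex_eq_iff)
  have a1: "(cmod (z - \<i>))^2 = (Re z)^2 + (Im z - 1)^2" by (simp add: cmod_power2)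
  have a2: "(cmod (z + \<i>))^2 = (Re z)^2 + (Im z + 1)^2" by (simp add: cmod_power2)
  have "(cmod (z - \<i>))^2 < (cmod (z + \<i>))^2" unfolding a1 a2 using assms
    by (simp add: power2_eq_square algebra_simps)
  then have "cmod (z - \<i>) < cmod (z + \<i>)"
    by (meson norm_ge_zero power_less_imp_less_base)
  then show ?thesis using ne by (simp add: cay_def norm_divide divide_less_eq)
qed

lemma cayi_H: assumes "w \<in> ball 0 1" shows "Im (cayi w) > 0"
proof -
  have nw: "cmod w < 1" using assms by auto
  have ne: "1 - w \<noteq> 0" using nw by auto
  have "Im (cayi w) = Re ((1 + w) * cnj (1 - w)) / (cmod (1 - w))^2"
    by (simp add: cayi_def Im_divide cmod_power2 algebra_simps)
  also have "Re ((1 + w) * cnj (1 - w)) = 1 - (cmod w)^2"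
    unfolding cmod_power2 by (simp add: algebra_simps power2_eq_square)
  finally have eq: "Im (cayi w) = (1 - (cmod w)^2) / (cmod (1 - w))^2" .
  have "(cmod w)^2 < 1" using nw by (simp add: abs_square_less_1)
  moreover have "(cmod (1 - w))^2 > 0" using ne by simp
  ultimately show ?thesis unfolding eq by (intro divide_pos_pos) auto
qed

lemma cayi_cay: assumes "Im z > 0" shows "cayi (cay z) = z"
proof -
  have ne: "z + \<i> \<noteq> 0" using assms by (auto simp: complex_eq_iff)
  have e1: "1 - cay z = 2 * \<i> / (z + \<i>)" using ne by (simp add: cay_def field_simps)
  have e2: "1 + cay z = 2 * z / (z + \<i>)" using ne by (simp add: cay_def field_simps)
  have e3: "\<i> * (2 * z / (z + \<i>)) = z * (2 * \<i> / (z + \<i>))" by simp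
  have e4: "2 * \<i> / (z + \<i>) \<noteq> 0" using ne by simp
  show ?thesis unfolding cayi_def e1 e2 e3 by (rule nonzero_mult_div_cancel_right[OF e4])
qed

lemma cay_hol: "cay holomorphic_on {z. Im z > 0}"
  unfolding cay_def by (intro holomorphic_intros) (auto simp: complex_eq_iff)

lemma cayi_hol: "cayi holomorphic_on ball 0 1"
  unfolding cayi_def by (intro holomorphic_intros) auto

lemma tD_cay: assumes "Im z > 0" "Im w > 0"
  shows "tD (cay z) (cay w) = cmod (z - w) / cmod (z - cnj w)"
proof -
  have nz: "z + \<i> \<noteq> 0" and nw: "w + \<i> \<noteq> 0" and nw': "cnj w - \<i> \<noteq> 0"
    using assms by (auto simp: complex_eq_iff)
  have e1: "cay z - cay w = 2 * \<i> * (z - w) / ((z + \<i>) * (w + \<i>))"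
    using nz nw by (simp add: cay_def field_simps)
  have cc: "cnj (cay w) * cay z = ((cnj w + \<i>) * (z - \<i>)) / ((cnj w - \<i>) * (z + \<i>))"
    by (simp add: cay_def)
  have num: "(cnj w - \<i>) * (z + \<i>) - (cnj w + \<i>) * (z - \<i>) = -2 * \<i> * (z - cnj w)"
    by (simp add: algebra_simps)
  have dn: "(cnj w - \<i>) * (z + \<i>) \<noteq> 0" using nz nw' by simp
  have e2: "1 - cnj (cay w) * cay z = -2 * \<i> * (z - cnj w) / ((cnj w - \<i>) * (z + \<i>))"
    unfolding cc num[symmetric] using dn by (simp add: diff_divide_distrib)
  have n3: "cmod (cnj w - \<i>) = cmod (w + \<i>)"
  proof -
    have "cnj w - \<i> = cnj (w + \<i>)" by simp
    then show ?thesis by (simp only: complex_mod_cnj)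
  qed
  define P where "P = cmod (z + \<i>) * cmod (w + \<i>)"
  have P: "P > 0" using nz nw by (simp add: P_def)
  have m1: "cmod (cay z - cay w) = 2 * cmod (z - w) / P"
    unfolding e1 P_def by (simp add: norm_divide norm_mult)
  have m2: "cmod (1 - cnj (cay w) * cay z) = 2 * cmod (z - cnj w) / P"
    unfolding e2 P_def by (simp add: norm_divide norm_mult n3 mult.commute)
  show ?thesis unfolding tD_eq m1 m2 using P by (simp add: field_simps)
qed

lemma D_ne_H: "unit_disc \<noteq> upper_half_plane"
proof
  assume "unit_disc = upper_half_plane"
  moreover have "0 \<in> unit_disc" by (simp add: unit_disc_def)
  moreover have "0 \<notin> upper_half_plane" by (simp add: upper_half_plane_def)
  ultimately show False by simp
qed

definition phi :: "complex set \<Rightarrow> complex \<Rightarrow> complex" where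
  "phi X = (if X = unit_disc then id else cay)"
definition psi :: "complex set \<Rightarrow> complex \<Rightarrow> complex" where
  "psi X = (if X = unit_disc then id else cayi)"
definition TT :: "complex set \<Rightarrow> complex \<Rightarrow> complex \<Rightarrow> real" where
  "TT X z w = tD (phi X z) (phi X w)"

lemma rdiv: "q \<noteq> 0 \<Longrightarrow> real_of_ereal (1 / ereal q) = 1 / q"
  by (metis ereal_divide one_ereal_def real_of_ereal.simps(1))

lemma phipsi_D:
  shows "psi unit_disc holomorphic_on ball 0 1" "psi unit_disc ` ball 0 1 \<subseteq> unit_disc"
    "phi unit_disc holomorphic_on unit_disc" "phi unit_disc ` unit_disc \<subseteq> ball 0 1"
    "\<And>z. z \<in> unit_disc \<Longrightarrow> psi unit_disc (phi unit_disc z) = z"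
  by (auto simp: phi_def psi_def unit_disc_def)

lemma phipsi_H:
  shows "psi upper_half_plane holomorphic_on ball 0 1" "psi upper_half_plane ` ball 0 1 \<subseteq> upper_half_plane"
    "phi upper_half_plane holomorphic_on upper_half_plane" "phi upper_half_plane ` upper_half_plane \<subseteq> ball 0 1"
    "\<And>z. z \<in> upper_half_plane \<Longrightarrow> psi upper_half_plane (phi upper_half_plane z) = z"
  using D_ne_H[symmetric] cayi_hol cay_hol cayi_H cay_D cayi_cay
  by (auto simp: phi_def psi_def upper_half_plane_def[symmetric]) (auto simp: upper_half_plane_def)

lemma phipsi:
  assumes "X \<in> {unit_disc, upper_half_plane}"
  shows "psi X holomorphic_on ball 0 1" "psi X ` ball 0 1 \<subseteq> X"
    "phi X holomorphic_on X" "phi X ` X \<subseteq> ball 0 1" "\<And>z. z \<in> X \<Longrightarrow> psi X (phi X z) = z"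
  using assms phipsi_D phipsi_H by auto

lemma TT_mono:
  assumes X: "X \<in> {unit_disc, upper_half_plane}" and Y: "Y \<in> {unit_disc, upper_half_plane}"
    and holf: "f holomorphic_on X" and fXY: "f ` X \<subseteq> Y" and z1: "z1 \<in> X" and z2: "z2 \<in> X"
  shows "TT Y (f z1) (f z2) \<le> TT X z1 z2"
proof -
  note PX = phipsi[OF X] and PY = phipsi[OF Y]
  define g where "g = phi Y \<circ> (f \<circ> psi X)"
  have h1: "(f \<circ> psi X) holomorphic_on ball 0 1"
    by (rule holomorphic_on_compose_gen[OF PX(1) holf PX(2)])
  have h2: "(f \<circ> psi X) ` ball 0 1 \<subseteq> Y" using PX(2) fXY by auto
  have holg: "g holomorphic_on ball 0 1" unfolding g_def
    by (rule holomorphic_on_compose_gen[OF h1 PY(3) h2])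
  have gD: "g z \<in> ball 0 1" if "z \<in> ball 0 1" for z
  proof -
    have "(f \<circ> psi X) z \<in> Y" using h2 that by blast
    then show ?thesis using PY(4) unfolding g_def by auto
  qed
  have gphi: "g (phi X z) = phi Y (f z)" if "z \<in> X" for z
    using that PX(5) by (simp add: g_def)
  have "tD (g (phi X z1)) (g (phi X z2)) \<le> tD (phi X z1) (phi X z2)"
    by (rule schwarz_pick[OF holg gD]) (use PX(4) z1 z2 in auto)
  then show ?thesis by (simp add: TT_def gphi z1 z2)
qed

lemma TT_D: "TT unit_disc z w = cmod (z - w) / cmod (1 - cnj w * z)"
  by (simp add: TT_def phi_def tD_eq)

lemma TT_H: "z \<in> upper_half_plane \<Longrightarrow> w \<in> upper_half_plane \<Longrightarrow>
   TT upper_half_plane z w = cmod (z - w) / cmod (z - cnj w)"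
  using D_ne_H by (simp add: TT_def phi_def tD_cay upper_half_plane_def)

definition bt :: "ereal \<Rightarrow> complex \<Rightarrow> complex \<Rightarrow> complex \<Rightarrow> real" where
  "bt p z1 z2 z =
        (if p = \<infinity> then cmod (z1 - z2) / max (cmod (z1 - z)) (cmod (z2 - z))
         else cmod (z1 - z2) /
              ((cmod (z1 - z) powr real_of_ereal p + cmod (z - z2) powr real_of_ereal p)
                 powr (1 / real_of_ereal p)))"

lemma b_fun_bt: "b_fun G p z1 z2 = (SUP z\<in>frontier G. bt p z1 z2 z)"
  by (simp add: b_fun_def bt_def)

lemma gen_bounds:
  fixes a b d N c :: real
  assumes "a \<ge> 0" "b \<ge> 0" "d \<ge> 0" "d \<le> a + b" "N \<le> a + b" "a + b \<le> c * N" "c \<ge> 1" "N \<ge> 0"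
  shows "0 \<le> d / N" "d / (a + b) \<le> d / N" "d / N \<le> c * (d / (a + b))"
proof -
  show "0 \<le> d / N" using assms by simp
  have "d / (a + b) \<le> d / N \<and> d / N \<le> c * (d / (a + b))"
  proof (cases "N = 0")
    case True
    then have "a + b \<le> 0" using assms by simp
    then have "a + b = 0" "d = 0" using assms by linarith+
    then show ?thesis using True by auto
  next
    case False
    then have N: "N > 0" using assms by linarith
    then have ab: "a + b > 0" using assms by linarith
    have "d / (a + b) \<le> d / N" using N assms by (intro divide_left_mono) auto
    have q: "(a + b) / N \<le> c" using N assms by (simp add: pos_divide_le_eq)
    have "d / N = (d / (a + b)) * ((a + b) / N)" using ab N by simp
    also have "\<dots> \<le> (d / (a + b)) * c" using q assms ab by (intro mult_left_mono) auto
    finally have "d / N \<le> c * (d / (a + b))" by (simp add: mult.commute)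
    with \<open>d / (a + b) \<le> d / N\<close> show ?thesis by simp
  qed
  then show "d / (a + b) \<le> d / N" "d / N \<le> c * (d / (a + b))" by auto
qed

lemma bt_bounds:
  assumes p: "1 \<le> p"
  shows "0 \<le> bt p z1 z2 z"
    "cmod (z1 - z2) / (cmod (z1 - z) + cmod (z - z2)) \<le> bt p z1 z2 z"
    "bt p z1 z2 z \<le> 2 powr (1 - real_of_ereal (1 / p)) * (cmod (z1 - z2) / (cmod (z1 - z) + cmod (z - z2)))"
proof -
  define a b d where "a = cmod (z1 - z)" and "b = cmod (z - z2)" and "d = cmod (z1 - z2)"
  have ab: "a \<ge> 0" "b \<ge> 0" "d \<ge> 0" by (auto simp: a_def b_def d_def)
  have dab: "d \<le> a + b" unfolding a_def b_def d_def by (metis norm_triangle_ineq diff_add_cancel add_diff_eq)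
  have "\<exists>N. bt p z1 z2 z = d / N \<and> N \<le> a + b \<and> a + b \<le> 2 powr (1 - real_of_ereal (1 / p)) * N \<and> N \<ge> 0
        \<and> 1 \<le> 2 powr (1 - real_of_ereal (1 / p))"
  proof (cases "p = \<infinity>")
    case True
    have "cmod (z2 - z) = b" by (simp add: b_def norm_minus_commute)
    then show ?thesis using True ab
      by (intro exI[of _ "max a b"]) (auto simp: bt_def a_def d_def le_max_iff_disj)
  next
    case False
    then obtain q where q: "p = ereal q" "q \<ge> 1" using p by (cases p) auto
    have r: "real_of_ereal (1 / p) = 1 / q" using q by (simp add: rdiv)
    have c1: "1 \<le> 2 powr (1 - 1 / q)" using q by (auto simp: ge_one_powr_ge_zero)
    show ?thesis unfolding r using q ab c1 pm2[OF q(2) ab(1,2)] pm3[OF q(2) ab(1,2)]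
      by (intro exI[of _ "(a powr q + b powr q) powr (1/q)"]) (auto simp: bt_def a_def b_def d_def)
  qed
  then obtain N where N: "bt p z1 z2 z = d / N" "N \<le> a + b"
    "a + b \<le> 2 powr (1 - real_of_ereal (1 / p)) * N" "N \<ge> 0" "1 \<le> 2 powr (1 - real_of_ereal (1 / p))"
    by blast
  note G = gen_bounds[OF ab dab N(2,3,5,4)]
  show "0 \<le> bt p z1 z2 z" "cmod (z1 - z2) / (cmod (z1 - z) + cmod (z - z2)) \<le> bt p z1 z2 z"
    "bt p z1 z2 z \<le> 2 powr (1 - real_of_ereal (1 / p)) * (cmod (z1 - z2) / (cmod (z1 - z) + cmod (z - z2)))"
    using G unfolding N(1) a_def b_def d_def by auto
qed

lemma c_le2: assumes "1 \<le> p" shows "2 powr (1 - real_of_ereal (1 / p)) \<le> 2"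
proof (cases "p = \<infinity>")
  case True then show ?thesis by simp
next
  case False
  then obtain q where q: "p = ereal q" "q \<ge> 1" using assms by (cases p) auto
  have "2 powr (1 - 1/q) \<le> 2 powr 1" using q by (intro powr_mono) auto
  then show ?thesis using q by (simp add: rdiv)
qed

lemma bt_le2: assumes "1 \<le> p" shows "bt p z1 z2 z \<le> 2"
proof -
  have tri: "cmod (z1 - z2) \<le> cmod (z1 - z) + cmod (z - z2)"
    by (metis norm_triangle_ineq diff_add_cancel add_diff_eq)
  have S0: "cmod (z1 - z) + cmod (z - z2) \<ge> 0" by simp
  have "cmod (z1 - z2) / (cmod (z1 - z) + cmod (z - z2)) \<le> 1"
  proof (cases "cmod (z1 - z) + cmod (z - z2) = 0")
    case True then show ?thesis by simp
  next
    case False then have "cmod (z1 - z) + cmod (z - z2) > 0" using S0 by linarith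
    then show ?thesis using tri by (simp add: divide_le_eq_1_pos)
  qed
  moreover have "cmod (z1 - z2) / (cmod (z1 - z) + cmod (z - z2)) \<ge> 0" by simp
  ultimately have "2 powr (1 - real_of_ereal (1 / p)) * (cmod (z1 - z2) / (cmod (z1 - z) + cmod (z - z2))) \<le> 2 * 1"
    using c_le2[OF assms] by (intro mult_mono) auto
  then show ?thesis using bt_bounds(3)[OF assms, of z1 z2 z] by simp
qed

lemma frontier_D: "frontier unit_disc = sphere 0 1" by (simp add: unit_disc_def)

lemma frontier_H: "frontier upper_half_plane = {z. Im z = 0}"
proof -
  have "upper_half_plane = {x. \<i> \<bullet> x > 0}" by (simp add: upper_half_plane_def)
  then show ?thesis using frontier_halfspace_gt[of \<i> 0] by simp
qed

lemma circ_id: assumes "cmod z = 1" shows "cmod (1 - cnj w * z) = cmod (z - w)"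
proof -
  have zz: "z * cnj z = 1" using assms by (simp add: complex_norm_square[symmetric])
  have "1 - cnj w * z = z * cnj (z - w)" using zz by (simp add: algebra_simps)
  moreover have "cmod (cnj (z - w)) = cmod (z - w)" by (rule complex_mod_cnj)
  ultimately show ?thesis using assms by (simp only: norm_mult)
qed

lemma circ_ineq: assumes "cmod z = 1" "cmod w2 \<le> 1"
  shows "cmod (1 - cnj w2 * w1) \<le> cmod (w1 - z) + cmod (z - w2)"
proof -
  have "1 - cnj w2 * w1 = (1 - cnj w2 * z) + cnj w2 * (z - w1)" by (simp add: algebra_simps)
  then have "cmod (1 - cnj w2 * w1) \<le> cmod (1 - cnj w2 * z) + cmod (cnj w2 * (z - w1))"
    by (metis norm_triangle_ineq)
  also have "cmod (cnj w2 * (z - w1)) \<le> cmod (w1 - z)"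
    using assms(2) by (simp add: norm_mult norm_minus_commute mult_left_le_one_le)
  finally show ?thesis using circ_id[OF assms(1)] by simp
qed

lemma line_ineq: assumes "Im x = 0"
  shows "cmod (w1 - cnj w2) \<le> cmod (w1 - x) + cmod (x - w2)"
proof -
  have cx: "cnj x = x" using assms by (simp add: complex_eq_iff)
  have "cmod (x - w2) = cmod (x - cnj w2)"
    by (metis complex_cnj_diff complex_mod_cnj cx)
  moreover have "cmod (w1 - cnj w2) \<le> cmod (w1 - x) + cmod (x - cnj w2)"
    by (metis norm_triangle_ineq diff_add_cancel add_diff_eq)
  ultimately show ?thesis by simp
qed

lemma bdd_bt: "1 \<le> p \<Longrightarrow> bdd_above ((\<lambda>z. bt p z1 z2 z) ` S)"
  using bt_le2 by (intro bdd_aboveI2[of _ _ 2]) auto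

lemma upper_bound:
  assumes p: "1 \<le> p" and Y: "Y \<in> {unit_disc, upper_half_plane}" and w1: "w1 \<in> Y" and w2: "w2 \<in> Y"
  shows "b_fun Y p w1 w2 \<le> 2 powr (1 - real_of_ereal (1 / p)) * TT Y w1 w2"
proof -
  have key: "\<exists>A. A > 0 \<and> TT Y w1 w2 = cmod (w1 - w2) / A \<and>
      (\<forall>z\<in>frontier Y. A \<le> cmod (w1 - z) + cmod (z - w2))"
  proof (cases "Y = unit_disc")
    case True
    have n1: "cmod w1 < 1" "cmod w2 < 1" using w1 w2 True by (auto simp: unit_disc_def)
    have "cmod w2 * cmod w1 \<le> 1 * cmod w1" using n1 by (intro mult_right_mono) auto
    then have "cmod (cnj w2 * w1) < 1" using n1 by (simp add: norm_mult)
    then have "cnj w2 * w1 \<noteq> 1" by auto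
    then have "cmod (1 - cnj w2 * w1) > 0" by simp
    then show ?thesis using True n1 circ_ineq
      by (intro exI[of _ "cmod (1 - cnj w2 * w1)"]) (auto simp: TT_D frontier_D)
  next
    case False
    then have H: "Y = upper_half_plane" using Y by auto
    have "w1 - cnj w2 \<noteq> 0" using w1 w2 H by (auto simp: upper_half_plane_def complex_eq_iff)
    then show ?thesis using H w1 w2 line_ineq
      by (intro exI[of _ "cmod (w1 - cnj w2)"]) (auto simp: TT_H frontier_H)
  qed
  then obtain A where A: "A > 0" "TT Y w1 w2 = cmod (w1 - w2) / A"
    "\<And>z. z \<in> frontier Y \<Longrightarrow> A \<le> cmod (w1 - z) + cmod (z - w2)" by blast
  have "(1::complex) \<in> frontier Y" using Y by (auto simp: frontier_D frontier_H)
  then have ne: "frontier Y \<noteq> {}" by blast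
  show ?thesis unfolding b_fun_bt
  proof (rule cSUP_least[OF ne])
    fix z assume z: "z \<in> frontier Y"
    have "cmod (w1 - w2) / (cmod (w1 - z) + cmod (z - w2)) \<le> cmod (w1 - w2) / A"
      using A(1) A(3)[OF z] by (intro divide_left_mono) auto
    then have "2 powr (1 - real_of_ereal (1 / p)) * (cmod (w1 - w2) / (cmod (w1 - z) + cmod (z - w2)))
        \<le> 2 powr (1 - real_of_ereal (1 / p)) * TT Y w1 w2"
      unfolding A(2) by (intro mult_left_mono) auto
    then show "bt p w1 w2 z \<le> 2 powr (1 - real_of_ereal (1 / p)) * TT Y w1 w2"
      using bt_bounds(3)[OF p, of w1 w2 z] by linarith
  qed
qed

lemma lower_H:
  assumes p: "1 \<le> p" and z1: "z1 \<in> upper_half_plane" and z2: "z2 \<in> upper_half_plane"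
  shows "TT upper_half_plane z1 z2 \<le> b_fun upper_half_plane p z1 z2"
proof -
  define y1 y2 where "y1 = Im z1" and "y2 = Im z2"
  have y: "y1 > 0" "y2 > 0" using z1 z2 by (auto simp: y1_def y2_def upper_half_plane_def)
  define s where "s = y1 + y2"
  have s: "s > 0" using y by (simp add: s_def)
  define x where "x = (of_real y2 * z1 + of_real y1 * cnj z2) / of_real s"
  have Imx: "Im x = 0" using s by (simp add: x_def y1_def y2_def s_def Im_divide_of_real)
  have sc: "(of_real s :: complex) \<noteq> 0" using s by simp
  have ss: "(of_real s :: complex) = of_real y1 + of_real y2" by (simp add: s_def)
  have e1: "z1 - x = of_real (y1 / s) * (z1 - cnj z2)"
  proof -
    have "of_real s * (z1 - x) = of_real s * (of_real (y1 / s) * (z1 - cnj z2))"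
      using sc unfolding x_def by (simp add: field_simps) (simp add: ss algebra_simps)
    then show ?thesis using mult_left_cancel[OF sc] by blast
  qed
  have e2: "x - cnj z2 = of_real (y2 / s) * (z1 - cnj z2)"
  proof -
    have "of_real s * (x - cnj z2) = of_real s * (of_real (y2 / s) * (z1 - cnj z2))"
      using sc unfolding x_def by (simp add: field_simps) (simp add: ss algebra_simps)
    then show ?thesis using mult_left_cancel[OF sc] by blast
  qed
  have cx: "cnj x = x" using Imx by (simp add: complex_eq_iff)
  have e3: "cmod (x - z2) = cmod (x - cnj z2)"
    by (metis complex_cnj_diff complex_mod_cnj cx)
  have sum: "cmod (z1 - x) + cmod (x - z2) = cmod (z1 - cnj z2)"
  proof -
    have n1: "cmod (z1 - x) = (y1 / s) * cmod (z1 - cnj z2)"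
      unfolding e1 norm_mult norm_of_real using y s by simp
    have n2: "cmod (x - cnj z2) = (y2 / s) * cmod (z1 - cnj z2)"
      unfolding e2 norm_mult norm_of_real using y s by simp
    have one: "y1 / s + y2 / s = 1" using s by (simp add: s_def add_divide_distrib[symmetric])
    show ?thesis unfolding e3 n1 n2 distrib_right[symmetric] one by simp
  qed
  have "TT upper_half_plane z1 z2 = cmod (z1 - z2) / (cmod (z1 - x) + cmod (x - z2))"
    using TT_H[OF z1 z2] sum by simp
  also have "\<dots> \<le> bt p z1 z2 x" by (rule bt_bounds(2)[OF p])
  also have "\<dots> \<le> b_fun upper_half_plane p z1 z2" unfolding b_fun_bt
    by (rule cSUP_upper[OF _ bdd_bt[OF p]]) (simp add: frontier_H Imx)
  finally show ?thesis .
qed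

lemma circ_pt:
  assumes "cmod z1 < 1" "cmod z2 \<le> cmod z1"
  shows "\<exists>z. cmod z = 1 \<and> cmod (z1 - z) + cmod (z - z2) \<le> 2 * cmod (1 - cnj z2 * z1)"
proof -
  define r where "r = cmod z1"
  define z where "z = (if z1 = 0 then 1 else z1 / of_real r)"
  have nz: "cmod z = 1" by (simp add: z_def r_def norm_divide)
  have z1z: "z1 = of_real r * z" by (auto simp: z_def r_def)
  define u where "u = cnj z2 * z"
  define r2 where "r2 = cmod z2"
  have nu: "cmod u = r2" by (simp add: u_def r2_def norm_mult nz)
  have r: "0 \<le> r" "r < 1" "r2 \<le> r" "0 \<le> r2" using assms by (auto simp: r_def r2_def)
  have a: "cmod (z1 - z) = 1 - r"
  proof -
    have h: "z1 - z = of_real (r - 1) * z" by (simp add: z1z algebra_simps)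
    show ?thesis unfolding h norm_mult norm_of_real using r nz by simp
  qed
  have b: "cmod (z - z2) = cmod (1 - u)" using circ_id[OF nz, of z2] by (simp add: u_def)
  have A: "cnj z2 * z1 = of_real r * u" by (simp add: u_def z1z)
  have t1: "cmod (1 - u) \<le> cmod (1 - of_real r * u) + (1 - r) * r2"
  proof -
    have "1 - u = (1 - of_real r * u) - of_real (1 - r) * u" by (simp add: algebra_simps)
    then have "cmod (1 - u) \<le> cmod (1 - of_real r * u) + cmod (of_real (1 - r) * u)"
      by (metis norm_triangle_ineq4)
    moreover have "cmod (of_real (1 - r) * u) = (1 - r) * r2"
      unfolding norm_mult norm_of_real using r nu by simp
    ultimately show ?thesis by simp
  qed
  have t2: "1 \<le> cmod (1 - of_real r * u) + r * r2"
  proof -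
    have "(1::complex) = (1 - of_real r * u) + of_real r * u" by simp
    then have "cmod (1::complex) \<le> cmod (1 - of_real r * u) + cmod (of_real r * u)"
      by (metis norm_triangle_ineq)
    then show ?thesis using r nu by (simp add: norm_mult)
  qed
  have "r * r2 \<le> r * r" using r by (intro mult_left_mono) auto
  have "(1 - r) * r2 = r2 - r * r2" by (simp add: algebra_simps)
  then have "cmod (z1 - z) + cmod (z - z2) \<le> 2 * cmod (1 - cnj z2 * z1)"
    unfolding a b A using t1 t2 r by linarith
  then show ?thesis using nz by blast
qed

lemma lower_D:
  assumes p: "1 \<le> p" and z1: "z1 \<in> unit_disc" and z2: "z2 \<in> unit_disc"
  shows "TT unit_disc z1 z2 \<le> 2 * b_fun unit_disc p z1 z2"
proof -
  have n: "cmod z1 < 1" "cmod z2 < 1" using z1 z2 by (auto simp: unit_disc_def)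
  have sym: "cmod (1 - cnj z1 * z2) = cmod (1 - cnj z2 * z1)"
  proof -
    have "1 - cnj z1 * z2 = cnj (1 - cnj z2 * z1)" by simp
    then show ?thesis by (simp only: complex_mod_cnj)
  qed
  obtain z where z: "cmod z = 1" "cmod (z1 - z) + cmod (z - z2) \<le> 2 * cmod (1 - cnj z2 * z1)"
  proof (cases "cmod z2 \<le> cmod z1")
    case True then show ?thesis using circ_pt[OF n(1) True] that by blast
  next
    case False
    then obtain z where "cmod z = 1" "cmod (z2 - z) + cmod (z - z1) \<le> 2 * cmod (1 - cnj z1 * z2)"
      using circ_pt[OF n(2), of z1] by auto
    then show ?thesis using that[of z] sym by (simp add: norm_minus_commute add.commute)
  qed
  have pos: "cmod (z1 - z) > 0" using z n by auto
  define d where "d = cmod (z1 - z2)"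
  define S where "S = cmod (z1 - z) + cmod (z - z2)"
  have S: "S > 0" using pos by (simp add: S_def add_pos_nonneg)
  have "TT unit_disc z1 z2 \<le> 2 * (d / S)"
  proof (cases "cmod (1 - cnj z2 * z1) = 0")
    case True then show ?thesis using S by (simp add: TT_D d_def)
  next
    case False
    then have Ap: "cmod (1 - cnj z2 * z1) > 0" by simp
    have "d * S \<le> d * (2 * cmod (1 - cnj z2 * z1))" using z(2) by (intro mult_left_mono) (auto simp: d_def S_def)
    then show ?thesis using S Ap by (simp add: TT_D d_def[symmetric] field_simps)
  qed
  also have "d / S \<le> bt p z1 z2 z" unfolding d_def S_def by (rule bt_bounds(2)[OF p])
  also have "bt p z1 z2 z \<le> b_fun unit_disc p z1 z2" unfolding b_fun_bt
    by (rule cSUP_upper[OF _ bdd_bt[OF p]]) (simp add: frontier_D z)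
  finally show ?thesis by simp
qed

theorem proposition4p5:
  fixes f :: "complex \<Rightarrow> complex" and G \<Omega> :: "complex set" and p :: ereal
  assumes "G \<in> {unit_disc, upper_half_plane}"
    and "\<Omega> \<in> {unit_disc, upper_half_plane}"
    and "mobius_onto f G \<Omega>"
    and "1 \<le> p"
    and "L = (if G = unit_disc then 2 powr (2 - real_of_ereal (1 / p))
              else 2 powr (1 - real_of_ereal (1 / p)))"
  shows "\<forall>z1\<in>G. \<forall>z2\<in>G. b_fun \<Omega> p (f z1) (f z2) \<le> L * b_fun G p z1 z2"
proof (intro ballI)
  fix z1 z2 assume z1: "z1 \<in> G" and z2: "z2 \<in> G"
  obtain a b c d where ad: "\<forall>z\<in>G. c * z + d \<noteq> 0 \<and> f z = (a * z + b) / (c * z + d)"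
    and onto: "f ` G = \<Omega>"
    using assms(3) unfolding mobius_onto_def by blast
  have "(\<lambda>z. (a * z + b) / (c * z + d)) holomorphic_on G"
    using ad by (intro holomorphic_intros) auto
  then have holf: "f holomorphic_on G"
    by (rule holomorphic_transform) (use ad in auto)
  have fG: "f ` G \<subseteq> \<Omega>" using onto by simp
  have fz1: "f z1 \<in> \<Omega>" and fz2: "f z2 \<in> \<Omega>" using z1 z2 onto by auto
  define c0 where "c0 = 2 powr (1 - real_of_ereal (1 / p))"
  have c0: "c0 \<ge> 0" by (simp add: c0_def)
  have s1: "b_fun \<Omega> p (f z1) (f z2) \<le> c0 * TT \<Omega> (f z1) (f z2)"
    unfolding c0_def by (rule upper_bound[OF assms(4) assms(2) fz1 fz2])
  have s2: "TT \<Omega> (f z1) (f z2) \<le> TT G z1 z2"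
    by (rule TT_mono[OF assms(1) assms(2) holf fG z1 z2])
  have s12: "b_fun \<Omega> p (f z1) (f z2) \<le> c0 * TT G z1 z2"
    using s1 mult_left_mono[OF s2 c0] by linarith
  show "b_fun \<Omega> p (f z1) (f z2) \<le> L * b_fun G p z1 z2"
  proof (cases "G = unit_disc")
    case True
    have e: "2 - real_of_ereal (1 / p) = 1 + (1 - real_of_ereal (1 / p))" by simp
    have "(2::real) powr (2 - real_of_ereal (1 / p)) = 2 powr 1 * 2 powr (1 - real_of_ereal (1 / p))"
      unfolding e by (rule powr_add)
    then have L: "L = 2 * c0" using True assms(5) by (simp add: c0_def)
    have "TT G z1 z2 \<le> 2 * b_fun G p z1 z2" using lower_D[OF assms(4)] z1 z2 True by simp
    then have "c0 * TT G z1 z2 \<le> c0 * (2 * b_fun G p z1 z2)" using c0 by (rule mult_left_mono)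
    then show ?thesis using s12 L by simp
  next
    case False
    then have H: "G = upper_half_plane" using assms(1) by auto
    have L: "L = c0" using False assms(5) by (simp add: c0_def)
    have "TT G z1 z2 \<le> b_fun G p z1 z2" using lower_H[OF assms(4)] z1 z2 H by simp
    then have "c0 * TT G z1 z2 \<le> c0 * b_fun G p z1 z2" using c0 by (rule mult_left_mono)
    then show ?thesis using s12 L by simp
  qed
qed

end
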